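(* Let $k$ be a field of characteristic $\neq2$, $f\in k[X]$ separable of degree $6$ with set of roots $\Omega\subset\bar k$, $l=k(\Omega)$, $A=k[X]/(f)$, $\delta\in A^*$, and $\delta_\omega=\varphi_\omega(\delta)$ for $\omega\in\Omega$, where $\varphi_\omega$ is evaluation at $X=\omega$. Fix square roots $\sqrt{\delta_\omega}\in\bar k$ and let $m=l(\{\sqrt{\delta_\omega}\sqrt{\delta_\psi}:\omega,\psi\in\Omega\})$. Then $k([\Lambda])=m$.
   Context: $\Lambda$ is the set of $32$ lines $L_\varepsilon\subset\mathbb{P}(A\otimes\bar k)$, for $\varepsilon\in A\otimes\bar k$ with $\varepsilon^2=\delta$, where $L_\varepsilon$ corresponds to the subspace $\{\varepsilon^{-1}(sX+t):s,t\in\bar k\}$. These lines lie on $V_{f,\delta}=\{[q]:\delta q^2\in\mathrm{span}(1,X,X^2)\}$. $G(\bar k/k)$ acts on them. For an object or set $Y$ acted on by $G(\bar k/k)$, the field of definition $k(Y)$ is the smallest subfield $k'\subseteq\bar k$ containing $k$ such that every $\sigma\in G(\bar k/k')$ fixes $Y$. $k([\Lambda])$ denotes the field of definition of the sequence of all lines in $\Lambda$, i.e., the smallest such field over which every line of $\Lambda$ is individually fixed. *)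

theory Defs
  imports "HOL-Computational_Algebra.Computational_Algebra"
begin

(* A subset F of the ambient field (playing the role of \bar k) is a subfield. *)
definition is_subfield :: "'a::field set \<Rightarrow> bool" where
  "is_subfield F \<longleftrightarrow> 0 \<in> F \<and> 1 \<in> F \<and>
     (\<forall>x\<in>F. \<forall>y\<in>F. x + y \<in> F \<and> x - y \<in> F \<and> x * y \<in> F) \<and>
     (\<forall>x\<in>F. inverse x \<in> F)"

definition field_gen :: "'a::field set \<Rightarrow> 'a set" where
  "field_gen S = \<Inter>{F. is_subfield F \<and> S \<subseteq> F}"

definition field_aut :: "('a::field \<Rightarrow> 'a) \<Rightarrow> bool" where
  "field_aut \<sigma> \<longleftrightarrow> bij \<sigma> \<and> \<sigma> 1 = 1 \<and>
     (\<forall>x y. \<sigma> (x + y) = \<sigma> x + \<sigma> y) \<and> (\<forall>x y. \<sigma> (x * y) = \<sigma> x * \<sigma> y)"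

definition poly_over :: "'a::field set \<Rightarrow> 'a poly \<Rightarrow> bool" where
  "poly_over k p \<longleftrightarrow> (\<forall>i. coeff p i \<in> k)"

(* A \<otimes> \bar k = \bar k[X]/(f), elements represented by reduced residues q = q mod f.
   The line L_eps = { eps^{-1} (sX+t) : s,t } as a set of reduced residues. *)
definition line_of :: "'a::field poly \<Rightarrow> 'a poly \<Rightarrow> 'a poly set" where
  "line_of f e = {q. q mod f = q \<and> (\<exists>s t. (e * q) mod f = [:t, s:] mod f)}"

(* \<Lambda>: the lines L_eps for eps in A \<otimes> \bar k with eps^2 = delta (delta represented by d) *)
definition Lambda_lines :: "'a::field poly \<Rightarrow> 'a poly \<Rightarrow> 'a poly set set" where
  "Lambda_lines f d = {line_of f e | e. (e * e) mod f = d mod f}"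

definition fixes_each :: "'a::field set \<Rightarrow> 'a poly set set \<Rightarrow> bool" where
  "fixes_each F Ys \<longleftrightarrow> (\<forall>\<sigma>. field_aut \<sigma> \<and> (\<forall>x\<in>F. \<sigma> x = x) \<longrightarrow>
      (\<forall>Y\<in>Ys. map_poly \<sigma> ` Y = Y))"

definition is_field_of_def_seq :: "'a::field set \<Rightarrow> 'a poly set set \<Rightarrow> 'a set \<Rightarrow> bool" where
  "is_field_of_def_seq k Ys m \<longleftrightarrow> is_subfield m \<and> k \<subseteq> m \<and> fixes_each m Ys \<and>
     (\<forall>k'. is_subfield k' \<and> k \<subseteq> k' \<and> fixes_each k' Ys \<longrightarrow> m \<subseteq> k')"

end

theory Submission
  imports Defs
begin


section \<open>Subfields\<close>

lemma sf_0: "is_subfield F \<Longrightarrow> 0 \<in> F" by (simp add: is_subfield_def)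
lemma sf_1: "is_subfield F \<Longrightarrow> 1 \<in> F" by (simp add: is_subfield_def)
lemma sf_add: "is_subfield F \<Longrightarrow> x \<in> F \<Longrightarrow> y \<in> F \<Longrightarrow> x + y \<in> F" by (simp add: is_subfield_def)
lemma sf_diff: "is_subfield F \<Longrightarrow> x \<in> F \<Longrightarrow> y \<in> F \<Longrightarrow> x - y \<in> F" by (simp add: is_subfield_def)
lemma sf_mult: "is_subfield F \<Longrightarrow> x \<in> F \<Longrightarrow> y \<in> F \<Longrightarrow> x * y \<in> F" by (simp add: is_subfield_def)
lemma sf_inverse: "is_subfield F \<Longrightarrow> x \<in> F \<Longrightarrow> inverse x \<in> F" by (simp add: is_subfield_def)
lemma sf_uminus: "is_subfield F \<Longrightarrow> x \<in> F \<Longrightarrow> - x \<in> F"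
  using sf_diff[of F 0 x] sf_0[of F] by simp
lemma sf_divide: "is_subfield F \<Longrightarrow> x \<in> F \<Longrightarrow> y \<in> F \<Longrightarrow> x / y \<in> F"
  by (simp add: divide_inverse sf_mult sf_inverse)
lemma sf_power: "is_subfield F \<Longrightarrow> x \<in> F \<Longrightarrow> x ^ n \<in> F"
  by (induction n) (auto intro: sf_1 sf_mult)
lemma sf_sum: "is_subfield F \<Longrightarrow> (\<And>i. i \<in> I \<Longrightarrow> g i \<in> F) \<Longrightarrow> sum g I \<in> F"
  by (induction I rule: infinite_finite_induct) (auto intro: sf_0 sf_add)
lemma sf_prod: "is_subfield F \<Longrightarrow> (\<And>i. i \<in> I \<Longrightarrow> g i \<in> F) \<Longrightarrow> prod g I \<in> F"
  by (induction I rule: infinite_finite_induct) (auto intro: sf_1 sf_mult)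

lemma sf_UNIV: "is_subfield (UNIV :: 'a::field set)" by (simp add: is_subfield_def)

lemma sf_Inter: "(\<And>F. F \<in> S \<Longrightarrow> is_subfield F) \<Longrightarrow> is_subfield (\<Inter>S)"
  by (auto simp: is_subfield_def)

lemma field_gen_sf: "is_subfield (field_gen S)"
  unfolding field_gen_def by (rule sf_Inter) auto

lemma field_gen_sup: "S \<subseteq> field_gen S"
  unfolding field_gen_def by auto

lemma field_gen_least: "is_subfield F \<Longrightarrow> S \<subseteq> F \<Longrightarrow> field_gen S \<subseteq> F"
  unfolding field_gen_def by auto

section \<open>Polynomials over a subfield\<close>

lemma po_0[simp]: "is_subfield F \<Longrightarrow> poly_over F 0" by (simp add: poly_over_def sf_0)
lemma po_const: "is_subfield F \<Longrightarrow> c \<in> F \<Longrightarrow> poly_over F [:c:]"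
  by (simp add: poly_over_def coeff_pCons sf_0 split: nat.splits)
lemma po_pCons: "is_subfield F \<Longrightarrow> c \<in> F \<Longrightarrow> poly_over F p \<Longrightarrow> poly_over F (pCons c p)"
  by (auto simp: poly_over_def coeff_pCons split: nat.splits)
lemma po_pConsD: "poly_over F (pCons c p) \<Longrightarrow> c \<in> F \<and> poly_over F p"
  unfolding poly_over_def by (metis coeff_pCons_0 coeff_pCons_Suc)
lemma po_add: "is_subfield F \<Longrightarrow> poly_over F p \<Longrightarrow> poly_over F q \<Longrightarrow> poly_over F (p + q)"
  by (simp add: poly_over_def sf_add)
lemma po_diff: "is_subfield F \<Longrightarrow> poly_over F p \<Longrightarrow> poly_over F q \<Longrightarrow> poly_over F (p - q)"
  by (simp add: poly_over_def sf_diff)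
lemma po_uminus: "is_subfield F \<Longrightarrow> poly_over F p \<Longrightarrow> poly_over F (- p)"
  by (simp add: poly_over_def sf_uminus)
lemma po_smult: "is_subfield F \<Longrightarrow> c \<in> F \<Longrightarrow> poly_over F p \<Longrightarrow> poly_over F (smult c p)"
  by (simp add: poly_over_def sf_mult)
lemma po_monom: "is_subfield F \<Longrightarrow> c \<in> F \<Longrightarrow> poly_over F (monom c n)"
  by (simp add: poly_over_def coeff_monom sf_0)
lemma po_mult: "is_subfield F \<Longrightarrow> poly_over F p \<Longrightarrow> poly_over F q \<Longrightarrow> poly_over F (p * q)"
  unfolding poly_over_def coeff_mult by (auto intro!: sf_sum sf_mult)
lemma po_power: "is_subfield F \<Longrightarrow> poly_over F p \<Longrightarrow> poly_over F (p ^ n)"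
  by (induction n) (auto intro: po_mult po_const sf_1 simp: one_pCons)
lemma po_X: "is_subfield F \<Longrightarrow> poly_over F [:0, 1:]"
  by (simp add: po_pCons po_const sf_0 sf_1)
lemma po_linear: "is_subfield F \<Longrightarrow> a \<in> F \<Longrightarrow> poly_over F [:a, 1:]"
  by (simp add: po_pCons po_const sf_1)
lemma po_mono: "F \<subseteq> G \<Longrightarrow> poly_over F p \<Longrightarrow> poly_over G p"
  by (auto simp: poly_over_def)
lemma po_lead: "poly_over F p \<Longrightarrow> lead_coeff p \<in> F"
  by (simp add: poly_over_def)

lemma poly_in_sf: "is_subfield F \<Longrightarrow> poly_over F p \<Longrightarrow> x \<in> F \<Longrightarrow> poly p x \<in> F"
  by (induction p) (auto dest: po_pConsD intro: sf_add sf_mult sf_0)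

lemma poly_in_ring:
  assumes "F \<subseteq> S" "0 \<in> S" "\<And>x y. x \<in> S \<Longrightarrow> y \<in> S \<Longrightarrow> x + y \<in> S"
     "\<And>x y. x \<in> S \<Longrightarrow> y \<in> S \<Longrightarrow> x * y \<in> S" "poly_over F p" "x \<in> S"
  shows "poly p x \<in> S"
  using assms(5)
proof (induction p)
  case (pCons a p)
  then show ?case using assms by (auto dest!: po_pConsD)
qed (simp add: assms)

lemma po_divmod:
  assumes F: "is_subfield F" and g: "poly_over F g" "g \<noteq> 0" and p: "poly_over F p"
  shows "\<exists>q r. poly_over F q \<and> poly_over F r \<and> p = g * q + r \<and> (r = 0 \<or> degree r < degree g)"
  using p
proof (induction "degree p" arbitrary: p rule: less_induct)
  case less
  show ?case
  proof (cases "p = 0 \<or> degree p < degree g")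
    case True
    then show ?thesis using less.prems F by (intro exI[of _ 0] exI[of _ p]) auto
  next
    case False
    hence p0: "p \<noteq> 0" and dg: "degree g \<le> degree p" by auto
    define c where "c = lead_coeff p / lead_coeff g"
    define m where "m = monom c (degree p - degree g)"
    define p' where "p' = p - g * m"
    have cF: "c \<in> F" unfolding c_def using F less.prems g by (simp add: po_lead sf_divide)
    have mF: "poly_over F m" unfolding m_def using F cF by (simp add: po_monom)
    have p'F: "poly_over F p'" unfolding p'_def using F less.prems g mF by (simp add: po_diff po_mult)
    have c0: "c \<noteq> 0" unfolding c_def using p0 g by simp
    have dgm: "degree (g * m) = degree p" unfolding m_def using g c0 dg
      by (subst degree_mult_eq) (auto simp: degree_monom_eq)
    have "lead_coeff (g * m) = lead_coeff g * c" unfolding m_def using g c0 dg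
      by (simp add: lead_coeff_mult lead_coeff_monom degree_monom_eq)
    hence lgm: "lead_coeff (g * m) = lead_coeff p" using g by (simp add: c_def)
    have "p' = 0 \<or> degree p' < degree p"
    proof (cases "p' = 0")
      case False
      have "degree p' \<le> degree p" unfolding p'_def using dgm by (metis degree_diff_le order_refl)
      moreover have "coeff p' (degree p) = 0" unfolding p'_def using dgm lgm by simp
      ultimately show ?thesis using False by (metis leading_coeff_0_iff le_neq_implies_less)
    qed simp
    then show ?thesis
    proof
      assume "p' = 0"
      then show ?thesis using mF F by (intro exI[of _ m] exI[of _ 0]) (auto simp: p'_def)
    next
      assume "degree p' < degree p"
      from less.hyps[OF this p'F] obtain q r where qr: "poly_over F q" "poly_over F r"
        "p' = g * q + r" "r = 0 \<or> degree r < degree g" by blast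
      show ?thesis
        using qr mF F by (intro exI[of _ "q + m"] exI[of _ r])
          (auto simp: po_add algebra_simps p'_def eq_diff_eq)
    qed
  qed
qed


section \<open>Minimal polynomials\<close>

lemma minpoly_exists:
  assumes F: "is_subfield F" and g: "g \<noteq> 0" "poly_over F g" "poly g a = 0"
  shows "\<exists>p. poly_over F p \<and> lead_coeff p = 1 \<and> poly p a = 0 \<and>
            (\<forall>q. poly_over F q \<and> poly q a = 0 \<longrightarrow> (\<exists>s. poly_over F s \<and> q = p * s))"
proof -
  define P where "P n \<longleftrightarrow> (\<exists>p. p \<noteq> 0 \<and> poly_over F p \<and> poly p a = 0 \<and> degree p = n)" for n
  have "P (degree g)" using g unfolding P_def by blast
  hence "P (LEAST n. P n)" by (rule LeastI)
  then obtain p0 where p0: "p0 \<noteq> 0" "poly_over F p0" "poly p0 a = 0" "degree p0 = (LEAST n. P n)"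
    unfolding P_def by blast
  define p where "p = smult (inverse (lead_coeff p0)) p0"
  have pF: "poly_over F p" unfolding p_def using F p0 by (intro po_smult sf_inverse po_lead) auto
  have lc0: "lead_coeff p0 \<noteq> 0" using p0(1) by simp
  have lp: "lead_coeff p = 1" unfolding p_def using lc0 by simp
  have pa: "poly p a = 0" unfolding p_def using p0 by simp
  have dp: "degree p = (LEAST n. P n)" unfolding p_def using lc0 p0(4) by (simp only: degree_smult_eq inverse_eq_iff_eq inverse_zero) simp
  have p_nz: "p \<noteq> 0" using lp by auto
  show ?thesis
  proof (rule exI[of _ p], intro conjI allI impI pF lp pa)
    fix q assume q: "poly_over F q \<and> poly q a = 0"
    from po_divmod[OF F pF p_nz] q obtain s r where sr: "poly_over F s" "poly_over F r"
      "q = p * s + r" "r = 0 \<or> degree r < degree p" by blast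
    have "r = 0"
    proof (rule ccontr)
      assume "r \<noteq> 0"
      moreover have "poly r a = 0" using q sr pa by (simp add: eq_diff_eq[symmetric])
      ultimately have "P (degree r)" using sr unfolding P_def by blast
      hence "(LEAST n. P n) \<le> degree r" by (rule Least_le)
      with sr \<open>r \<noteq> 0\<close> dp show False by simp
    qed
    thus "\<exists>s. poly_over F s \<and> q = p * s" using sr by auto
  qed
qed

lemma monic_deg1_root:
  assumes F: "is_subfield F" and p: "poly_over F p" "lead_coeff p = 1" "degree p = 1" "poly p a = 0"
  shows "a \<in> F"
proof -
  obtain c q where pc0: "p = pCons c q" by (cases p) auto
  have "degree q = 0" using p(3) pc0 by (cases "q = 0") auto
  then obtain d where "q = [:d:]" by (metis degree_eq_zeroE)
  with pc0 have pc: "p = [:c, d:]" by simp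
  have "d = 1" using p(2) p(3) pc by simp
  hence "a = - c" using p(4) pc by (simp add: eq_neg_iff_add_eq_0 add.commute)
  moreover have "c \<in> F" using p(1) pc by (auto dest: po_pConsD)
  ultimately show ?thesis using F by (simp add: sf_uminus)
qed




locale acf =
  fixes K :: "'a::field set"
  assumes K: "is_subfield K"
  and closed: "\<forall>p::'a poly. degree p > 0 \<longrightarrow> (\<exists>x. poly p x = 0)"
  and alg: "\<forall>x::'a. \<exists>p. p \<noteq> 0 \<and> poly_over K p \<and> poly p x = 0"
begin

lemma ring_is_field:
  assumes KS: "K \<subseteq> S" and add: "\<And>x y. x \<in> S \<Longrightarrow> y \<in> S \<Longrightarrow> x + y \<in> S"
    and mul: "\<And>x y. x \<in> S \<Longrightarrow> y \<in> S \<Longrightarrow> x * y \<in> S"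
  shows "is_subfield S"
proof -
  have S0: "0 \<in> S" and S1: "1 \<in> S" and Sm1: "-1 \<in> S"
    using KS K sf_0 sf_1 sf_uminus[OF K sf_1[OF K]] by auto
  have inv: "inverse x \<in> S" if xS: "x \<in> S" for x
  proof (cases "x = 0")
    case True thus ?thesis using S0 by simp
  next
    case False
    from alg obtain g where g: "g \<noteq> 0" "poly_over K g" "poly g x = 0" by blast
    from minpoly_exists[OF K g] obtain p where p: "poly_over K p" "lead_coeff p = 1" "poly p x = 0"
      "\<And>q. poly_over K q \<Longrightarrow> poly q x = 0 \<Longrightarrow> \<exists>s. poly_over K s \<and> q = p * s" by blast
    obtain c p1 where pc: "p = pCons c p1" by (cases p) auto
    have c: "c \<in> K" and p1K: "poly_over K p1" using p(1) pc by (auto dest: po_pConsD)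
    have "c \<noteq> 0"
    proof
      assume c0: "c = 0"
      hence "poly p1 x = 0" using p(3) pc False by simp
      from p(4)[OF p1K this] obtain s where s: "p1 = p * s" by blast
      have p1nz: "p1 \<noteq> 0" using pc c0 p(2) by auto
      hence "s \<noteq> 0" using s by auto
      moreover have "p \<noteq> 0" using p(2) by auto
      ultimately have "degree p1 \<ge> degree p" using s by (simp add: degree_mult_eq)
      moreover have "degree p = Suc (degree p1)" using pc p1nz by simp
      ultimately show False by simp
    qed
    have "c + x * poly p1 x = 0" using p(3) pc by simp
    hence "x * poly p1 x = - c" by (simp add: add_eq_0_iff)
    hence "x * (- poly p1 x / c) = 1" using \<open>c \<noteq> 0\<close> by (simp add: field_simps)
    hence "inverse x = - poly p1 x / c" by (rule inverse_unique)
    hence "inverse x = poly (smult (- 1 / c) p1) x" by simp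
    moreover have "poly_over K (smult (- 1 / c) p1)"
      using K c p1K by (intro po_smult sf_divide sf_uminus sf_1) auto
    ultimately show ?thesis using poly_in_ring[OF KS S0 add mul _ xS, of "smult (- 1 / c) p1"] by metis
  qed
  show ?thesis unfolding is_subfield_def
  proof (intro conjI ballI S0 S1 add mul inv)
    fix x y assume "x \<in> S" "y \<in> S"
    hence "x + (-1) * y \<in> S" using Sm1 add mul by blast
    thus "x - y \<in> S" by simp
  qed
qed

definition emb :: "'a set \<Rightarrow> ('a \<Rightarrow> 'a) \<Rightarrow> bool" where
  "emb R \<phi> \<longleftrightarrow> is_subfield R \<and> K \<subseteq> R \<and> \<phi> 1 = 1 \<and>
     (\<forall>x\<in>R. \<forall>y\<in>R. \<phi> (x + y) = \<phi> x + \<phi> y \<and> \<phi> (x * y) = \<phi> x * \<phi> y)"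

lemma emb_sf: "emb R \<phi> \<Longrightarrow> is_subfield R" by (simp add: emb_def)
lemma emb_K: "emb R \<phi> \<Longrightarrow> K \<subseteq> R" by (simp add: emb_def)
lemma emb_1: "emb R \<phi> \<Longrightarrow> \<phi> 1 = 1" by (simp add: emb_def)
lemma emb_add: "emb R \<phi> \<Longrightarrow> x \<in> R \<Longrightarrow> y \<in> R \<Longrightarrow> \<phi> (x + y) = \<phi> x + \<phi> y" by (simp add: emb_def)
lemma emb_mult: "emb R \<phi> \<Longrightarrow> x \<in> R \<Longrightarrow> y \<in> R \<Longrightarrow> \<phi> (x * y) = \<phi> x * \<phi> y" by (simp add: emb_def)
lemma emb_0: "emb R \<phi> \<Longrightarrow> \<phi> 0 = 0"
proof -
  assume e: "emb R \<phi>"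
  have "0 \<in> R" using sf_0[OF emb_sf[OF e]] .
  from emb_add[OF e this this] have "\<phi> 0 + \<phi> 0 = 0 + \<phi> 0" by simp
  thus ?thesis by (metis add_right_cancel)
qed
lemma emb_uminus: "emb R \<phi> \<Longrightarrow> x \<in> R \<Longrightarrow> \<phi> (- x) = - \<phi> x"
proof -
  assume e: "emb R \<phi>" and x: "x \<in> R"
  have "- x \<in> R" using sf_uminus[OF emb_sf[OF e] x] .
  from emb_add[OF e x this] emb_0[OF e] have "\<phi> x + \<phi> (- x) = 0" by simp
  thus ?thesis by (simp add: eq_neg_iff_add_eq_0 add.commute)
qed
lemma emb_diff: "emb R \<phi> \<Longrightarrow> x \<in> R \<Longrightarrow> y \<in> R \<Longrightarrow> \<phi> (x - y) = \<phi> x - \<phi> y"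
proof -
  assume e: "emb R \<phi>" and x: "x \<in> R" and y: "y \<in> R"
  have "- y \<in> R" using sf_uminus[OF emb_sf[OF e] y] .
  from emb_add[OF e x this] emb_uminus[OF e y] show ?thesis by simp
qed
lemma emb_sum: "emb R \<phi> \<Longrightarrow> (\<And>i. i \<in> I \<Longrightarrow> g i \<in> R) \<Longrightarrow> \<phi> (sum g I) = (\<Sum>i\<in>I. \<phi> (g i))"
proof (induction I rule: infinite_finite_induct)
  case (insert x F)
  have "sum g F \<in> R" using sf_sum[OF emb_sf[OF insert.prems(1)], of F g] insert.prems by auto
  then show ?case using emb_add[OF insert.prems(1), of "g x" "sum g F"] insert by auto
qed (auto simp: emb_0)
lemma emb_nz: "emb R \<phi> \<Longrightarrow> x \<in> R \<Longrightarrow> x \<noteq> 0 \<Longrightarrow> \<phi> x \<noteq> 0"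
proof
  assume e: "emb R \<phi>" and x: "x \<in> R" "x \<noteq> 0" "\<phi> x = 0"
  have "inverse x \<in> R" using sf_inverse[OF emb_sf[OF e] x(1)] .
  from emb_mult[OF e x(1) this] x emb_1[OF e] show False by simp
qed
lemma emb_inj: "emb R \<phi> \<Longrightarrow> x \<in> R \<Longrightarrow> y \<in> R \<Longrightarrow> \<phi> x = \<phi> y \<Longrightarrow> x = y"
proof (rule ccontr)
  assume e: "emb R \<phi>" and x: "x \<in> R" and y: "y \<in> R" "\<phi> x = \<phi> y" "x \<noteq> y"
  have "x - y \<in> R" using sf_diff[OF emb_sf[OF e] x y(1)] .
  from emb_nz[OF e this] y emb_diff[OF e x y(1)] show False by simp
qed

lemma emb_coeff: "emb R \<phi> \<Longrightarrow> coeff (map_poly \<phi> p) n = \<phi> (coeff p n)"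
  by (simp add: coeff_map_poly emb_0)

lemma emb_map_add: "emb R \<phi> \<Longrightarrow> poly_over R p \<Longrightarrow> poly_over R q \<Longrightarrow>
   map_poly \<phi> (p + q) = map_poly \<phi> p + map_poly \<phi> q"
  by (intro poly_eqI) (simp add: emb_coeff emb_add poly_over_def)
lemma emb_map_diff: "emb R \<phi> \<Longrightarrow> poly_over R p \<Longrightarrow> poly_over R q \<Longrightarrow>
   map_poly \<phi> (p - q) = map_poly \<phi> p - map_poly \<phi> q"
  by (intro poly_eqI) (simp add: emb_coeff emb_diff poly_over_def)
lemma emb_map_mult: "emb R \<phi> \<Longrightarrow> poly_over R p \<Longrightarrow> poly_over R q \<Longrightarrow>
   map_poly \<phi> (p * q) = map_poly \<phi> p * map_poly \<phi> q"
proof (intro poly_eqI)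
  fix n assume e: "emb R \<phi>" and pq: "poly_over R p" "poly_over R q"
  have "coeff (map_poly \<phi> (p * q)) n = \<phi> (\<Sum>i\<le>n. coeff p i * coeff q (n - i))"
    by (simp add: emb_coeff[OF e] coeff_mult)
  also have "\<dots> = (\<Sum>i\<le>n. \<phi> (coeff p i) * \<phi> (coeff q (n - i)))"
    using pq by (subst emb_sum[OF e]) (auto simp: poly_over_def emb_mult[OF e] intro!: sf_mult[OF emb_sf[OF e]])
  finally show "coeff (map_poly \<phi> (p * q)) n = coeff (map_poly \<phi> p * map_poly \<phi> q) n"
    by (simp add: coeff_mult emb_coeff[OF e])
qed

lemma emb_poly: "emb R \<phi> \<Longrightarrow> poly_over R p \<Longrightarrow> x \<in> R \<Longrightarrow> \<phi> (poly p x) = poly (map_poly \<phi> p) (\<phi> x)"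
proof (induction p)
  case (pCons a p)
  have "a \<in> R" "poly_over R p" using pCons.prems by (auto dest: po_pConsD)
  thus ?case using pCons by (simp add: map_poly_pCons emb_0 emb_add emb_mult poly_in_sf emb_sf sf_mult)
qed (simp add: emb_0)

lemma emb_degree: "emb R \<phi> \<Longrightarrow> poly_over R p \<Longrightarrow> degree (map_poly \<phi> p) = degree p"
proof (cases "p = 0")
  case False
  assume e: "emb R \<phi>" and pR: "poly_over R p"
  have "coeff (map_poly \<phi> p) (degree p) \<noteq> 0"
    using emb_nz[OF e] False pR by (simp add: emb_coeff[OF e] poly_over_def)
  hence "degree p \<le> degree (map_poly \<phi> p)" by (rule le_degree)
  moreover have "degree (map_poly \<phi> p) \<le> degree p" by (rule map_poly_degree_leq)
  ultimately show ?thesis by simp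
qed simp

lemma emb_lead: "emb R \<phi> \<Longrightarrow> poly_over R p \<Longrightarrow> lead_coeff (map_poly \<phi> p) = \<phi> (lead_coeff p)"
  by (simp add: emb_degree emb_coeff)


lemma ext_step:
  assumes e: "emb R \<phi>"
    and p: "poly_over R p" "lead_coeff p = 1" "poly p a = 0"
       "\<And>q. poly_over R q \<Longrightarrow> poly q a = 0 \<Longrightarrow> \<exists>s. poly_over R s \<and> q = p * s"
    and b: "poly (map_poly \<phi> p) b = 0"
  shows "\<exists>R' \<phi>'. emb R' \<phi>' \<and> R \<subseteq> R' \<and> a \<in> R' \<and> (\<forall>x\<in>R. \<phi>' x = \<phi> x) \<and> \<phi>' a = b"
proof -
  have RF: "is_subfield R" using e by (rule emb_sf)
  define R' where "R' = {poly h a | h. poly_over R h}"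
  have constR: "poly_over R [:x:]" if "x \<in> R" for x using po_const[OF RF that] .
  have RR': "R \<subseteq> R'"
  proof
    fix x assume "x \<in> R" thus "x \<in> R'" unfolding R'_def using constR by (intro CollectI exI[of _ "[:x:]"]) auto
  qed
  have aR': "a \<in> R'" unfolding R'_def using po_X[OF RF] by (intro CollectI exI[of _ "[:0,1:]"]) auto
  have addR': "x + y \<in> R'" if "x \<in> R'" "y \<in> R'" for x y
  proof -
    from that obtain h1 h2 where "x = poly h1 a" "y = poly h2 a" "poly_over R h1" "poly_over R h2"
      unfolding R'_def by blast
    thus ?thesis unfolding R'_def by (intro CollectI exI[of _ "h1 + h2"]) (auto intro: po_add[OF RF])
  qed
  have mulR': "x * y \<in> R'" if "x \<in> R'" "y \<in> R'" for x y
  proof -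
    from that obtain h1 h2 where "x = poly h1 a" "y = poly h2 a" "poly_over R h1" "poly_over R h2"
      unfolding R'_def by blast
    thus ?thesis unfolding R'_def by (intro CollectI exI[of _ "h1 * h2"]) (auto intro: po_mult[OF RF])
  qed
  have R'F: "is_subfield R'"
    by (rule ring_is_field[OF _ addR' mulR']) (use RR' emb_K[OF e] in auto)
  have wd: "poly (map_poly \<phi> h1) b = poly (map_poly \<phi> h2) b"
    if h: "poly_over R h1" "poly_over R h2" "poly h1 a = poly h2 a" for h1 h2
  proof -
    have d: "poly_over R (h1 - h2)" using po_diff[OF RF h(1,2)] .
    have "poly (h1 - h2) a = 0" using h(3) by simp
    from p(4)[OF d this] obtain s where s: "poly_over R s" "h1 - h2 = p * s" by blast
    have "map_poly \<phi> h1 - map_poly \<phi> h2 = map_poly \<phi> p * map_poly \<phi> s"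
      using emb_map_diff[OF e h(1,2)] emb_map_mult[OF e p(1) s(1)] s(2) by simp
    hence "poly (map_poly \<phi> h1) b - poly (map_poly \<phi> h2) b = 0"
      using b by (metis poly_diff poly_mult mult_zero_left)
    thus ?thesis by simp
  qed
  define \<phi>' where "\<phi>' x = poly (map_poly \<phi> (SOME h. poly_over R h \<and> poly h a = x)) b" for x
  have key: "\<phi>' (poly h a) = poly (map_poly \<phi> h) b" if h: "poly_over R h" for h
  proof -
    have ex: "\<exists>h'. poly_over R h' \<and> poly h' a = poly h a" using h by blast
    from someI_ex[OF ex] have "poly_over R (SOME h'. poly_over R h' \<and> poly h' a = poly h a)"
      "poly (SOME h'. poly_over R h' \<and> poly h' a = poly h a) a = poly h a" by auto
    from wd[OF this(1) h this(2)] show ?thesis unfolding \<phi>'_def .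
  qed
  have onR: "\<phi>' x = \<phi> x" if "x \<in> R" for x
    using key[OF constR[OF that]] by (simp add: map_poly_pCons emb_0[OF e])
  have at_a: "\<phi>' a = b"
    using key[OF po_X[OF RF]] by (simp add: map_poly_pCons emb_0[OF e] emb_1[OF e])
  have "emb R' \<phi>'" unfolding emb_def
  proof (intro conjI ballI R'F)
    show "K \<subseteq> R'" using RR' emb_K[OF e] by auto
    show "\<phi>' 1 = 1" using onR[OF sf_1[OF RF]] emb_1[OF e] by simp
  next
    fix x y assume "x \<in> R'" "y \<in> R'"
    then obtain h1 h2 where hh: "x = poly h1 a" "y = poly h2 a" "poly_over R h1" "poly_over R h2"
      unfolding R'_def by blast
    have "\<phi>' (x + y) = \<phi>' (poly (h1 + h2) a)" using hh by simp
    also have "\<dots> = \<phi>' x + \<phi>' y" unfolding key[OF po_add[OF RF hh(3,4)]] emb_map_add[OF e hh(3,4)]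
      using hh key by simp
    finally show "\<phi>' (x + y) = \<phi>' x + \<phi>' y" .
    have "\<phi>' (x * y) = \<phi>' (poly (h1 * h2) a)" using hh by simp
    also have "\<dots> = \<phi>' x * \<phi>' y" unfolding key[OF po_mult[OF RF hh(3,4)]] emb_map_mult[OF e hh(3,4)]
      using hh key by simp
    finally show "\<phi>' (x * y) = \<phi>' x * \<phi>' y" .
  qed
  thus ?thesis using RR' aR' onR at_a by blast
qed


lemma monic_root_degree: "lead_coeff p = (1::'b::field) \<Longrightarrow> poly p a = 0 \<Longrightarrow> degree p > 0"
proof (rule ccontr)
  assume "lead_coeff p = 1" "poly p a = 0" "\<not> 0 < degree p"
  then obtain c where "p = [:c:]" by (metis degree_eq_zeroE not_gr0)
  with \<open>lead_coeff p = 1\<close> \<open>poly p a = 0\<close> show False by simp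
qed

lemma emb_fix_poly: "emb R \<phi> \<Longrightarrow> (\<forall>x\<in>F. \<phi> x = x) \<Longrightarrow> poly_over F g \<Longrightarrow> map_poly \<phi> g = g"
  by (intro poly_eqI) (simp add: emb_coeff poly_over_def)

lemma extend_aut:
  assumes e0: "emb R0 \<phi>0" and fixK: "\<forall>x\<in>K. \<phi>0 x = x"
  shows "\<exists>\<sigma>. field_aut \<sigma> \<and> (\<forall>x\<in>R0. \<sigma> x = \<phi>0 x)"
proof -
  define gr where "gr R \<phi> = (\<lambda>x. (x, \<phi> x)) ` R" for R and \<phi> :: "'a \<Rightarrow> 'a"
  define good where "good R \<phi> \<longleftrightarrow> emb R \<phi> \<and> R0 \<subseteq> R \<and> (\<forall>x\<in>R0. \<phi> x = \<phi>0 x)" for R \<phi>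
  define A where "A = {gr R \<phi> | R \<phi>. good R \<phi>}"
  have gr_mem: "(x, y) \<in> gr R \<phi> \<longleftrightarrow> x \<in> R \<and> y = \<phi> x" for x y R \<phi> unfolding gr_def by auto
  have "\<forall>C\<in>chains A. \<exists>U\<in>A. \<forall>X\<in>C. X \<subseteq> U"
  proof
    fix C assume C: "C \<in> chains A"
    show "\<exists>U\<in>A. \<forall>X\<in>C. X \<subseteq> U"
    proof (cases "C = {}")
      case True
      have "gr R0 \<phi>0 \<in> A" unfolding A_def good_def using e0 by blast
      thus ?thesis using True by blast
    next
      case False
      have CA: "\<And>G. G \<in> C \<Longrightarrow> \<exists>R \<phi>. good R \<phi> \<and> G = gr R \<phi>"
        using chainsD2[OF C] unfolding A_def by blast
      define U where "U = \<Union>C"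
      have sv: "y = z" if "(x, y) \<in> U" "(x, z) \<in> U" for x y z
      proof -
        from that obtain G1 G2 where G: "G1 \<in> C" "G2 \<in> C" "(x, y) \<in> G1" "(x, z) \<in> G2"
          unfolding U_def by blast
        have "\<exists>G\<in>C. (x, y) \<in> G \<and> (x, z) \<in> G" using chainsD[OF C G(1,2)] G by blast
        then obtain G where "G \<in> C" "(x, y) \<in> G" "(x, z) \<in> G" by blast
        with CA obtain R \<phi> where "G = gr R \<phi>" by blast
        with \<open>(x, y) \<in> G\<close> \<open>(x, z) \<in> G\<close> show ?thesis by (simp add: gr_mem)
      qed
      define R where "R = Domain U"
      define \<phi> where "\<phi> x = (THE y. (x, y) \<in> U)" for x
      have phi_eq: "\<phi> x = y" if "(x, y) \<in> U" for x y
        unfolding \<phi>_def using that sv by blast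
      have common: "\<exists>RG \<phi>G. good RG \<phi>G \<and> x \<in> RG \<and> y \<in> RG \<and> (\<forall>z\<in>RG. \<phi> z = \<phi>G z) \<and> RG \<subseteq> R"
        if "x \<in> R" "y \<in> R" for x y
      proof -
        from that obtain x' y' G1 G2 where G: "G1 \<in> C" "G2 \<in> C" "(x, x') \<in> G1" "(y, y') \<in> G2"
          unfolding R_def U_def by blast
        have "\<exists>G\<in>C. (x, x') \<in> G \<and> (y, y') \<in> G" using chainsD[OF C G(1,2)] G by blast
        then obtain G where GC: "G \<in> C" and "(x, x') \<in> G" "(y, y') \<in> G" by blast
        with CA obtain RG \<phi>G where g: "good RG \<phi>G" "G = gr RG \<phi>G" by blast
        have "\<forall>z\<in>RG. \<phi> z = \<phi>G z"
        proof
          fix z assume "z \<in> RG"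
          hence "(z, \<phi>G z) \<in> U" using g GC unfolding U_def by (auto simp: gr_mem)
          thus "\<phi> z = \<phi>G z" by (rule phi_eq)
        qed
        moreover have "RG \<subseteq> R" using g GC unfolding R_def U_def by (force simp: gr_mem)
        ultimately show ?thesis using g \<open>(x, x') \<in> G\<close> \<open>(y, y') \<in> G\<close> by (auto simp: gr_mem)
      qed
      obtain G0 where G0: "G0 \<in> C" using False by blast
      with CA obtain R1 \<phi>1 where g1: "good R1 \<phi>1" "G0 = gr R1 \<phi>1" by blast
      have R1R: "R1 \<subseteq> R" using g1 G0 unfolding R_def U_def by (force simp: gr_mem)
      have agree1: "\<forall>z\<in>R1. \<phi> z = \<phi>1 z"
        using g1 G0 phi_eq unfolding U_def by (force simp: gr_mem)
      have UR: "U = gr R \<phi>"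
      proof (intro set_eqI iffI)
        fix xy assume "xy \<in> U"
        then obtain x y where "xy = (x, y)" "(x, y) \<in> U" by (cases xy) auto
        thus "xy \<in> gr R \<phi>" using phi_eq unfolding R_def by (auto simp: gr_mem)
      next
        fix xy assume "xy \<in> gr R \<phi>"
        then obtain x where x: "xy = (x, \<phi> x)" "x \<in> R" by (auto simp: gr_def)
        then obtain y where "(x, y) \<in> U" unfolding R_def by auto
        thus "xy \<in> U" using phi_eq x by auto
      qed
      have "emb R \<phi>" unfolding emb_def
      proof (intro conjI ballI)
        show "K \<subseteq> R" using g1 R1R by (auto simp: good_def emb_def)
        show "\<phi> 1 = 1" using g1 agree1 by (auto simp: good_def emb_def is_subfield_def)
        show "is_subfield R" unfolding is_subfield_def
        proof (intro conjI ballI)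
          show "0 \<in> R" "1 \<in> R" using g1 R1R by (auto simp: good_def emb_def is_subfield_def)
        next
          fix x y assume "x \<in> R" "y \<in> R"
          from common[OF this] obtain RG \<phi>G where c: "good RG \<phi>G" "x \<in> RG" "y \<in> RG"
            "\<forall>z\<in>RG. \<phi> z = \<phi>G z" "RG \<subseteq> R" by blast
          have sf: "is_subfield RG" using c by (simp add: good_def emb_def)
          show "x + y \<in> R" "x - y \<in> R" "x * y \<in> R" using sf c by (auto simp: is_subfield_def)
        next
          fix x assume "x \<in> R"
          from common[OF this this] obtain RG \<phi>G where c: "good RG \<phi>G" "x \<in> RG"
            "RG \<subseteq> R" by blast
          have sf: "is_subfield RG" using c by (simp add: good_def emb_def)
          show "inverse x \<in> R" using sf c by (auto simp: is_subfield_def)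
        qed
      next
        fix x y assume "x \<in> R" "y \<in> R"
        from common[OF this] obtain RG \<phi>G where c: "good RG \<phi>G" "x \<in> RG" "y \<in> RG"
          "\<forall>z\<in>RG. \<phi> z = \<phi>G z" by blast
        have e: "emb RG \<phi>G" using c by (simp add: good_def)
        have s: "x + y \<in> RG" "x * y \<in> RG" using emb_sf[OF e] c by (auto intro: sf_add sf_mult)
        show "\<phi> (x + y) = \<phi> x + \<phi> y" "\<phi> (x * y) = \<phi> x * \<phi> y"
          using c s emb_add[OF e] emb_mult[OF e] by auto
      qed
      moreover have "R0 \<subseteq> R" "\<forall>x\<in>R0. \<phi> x = \<phi>0 x" using g1 R1R agree1 by (auto simp: good_def)
      ultimately have "U \<in> A" unfolding A_def good_def UR by blast
      thus ?thesis unfolding U_def by blast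
    qed
  qed
  from Zorn_Lemma2[OF this] obtain M where M: "M \<in> A" "\<And>X. X \<in> A \<Longrightarrow> M \<subseteq> X \<Longrightarrow> X = M" by blast
  then obtain R \<phi> where g: "good R \<phi>" "M = gr R \<phi>" unfolding A_def by blast
  have e: "emb R \<phi>" using g by (simp add: good_def)
  have RF: "is_subfield R" using emb_sf[OF e] .
  have fixK': "\<forall>x\<in>K. \<phi> x = x" using g fixK emb_K[OF e0] by (auto simp: good_def)
  have RU: "R = UNIV"
  proof (rule ccontr)
    assume "R \<noteq> UNIV"
    then obtain a where aR: "a \<notin> R" by blast
    from alg obtain g0 where g0: "g0 \<noteq> 0" "poly_over K g0" "poly g0 a = 0" by blast
    have "poly_over R g0" using po_mono[OF emb_K[OF e] g0(2)] .
    from minpoly_exists[OF RF g0(1) this g0(3)] obtain p where p: "poly_over R p" "lead_coeff p = 1"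
      "poly p a = 0" "\<And>q. poly_over R q \<Longrightarrow> poly q a = 0 \<Longrightarrow> \<exists>s. poly_over R s \<and> q = p * s" by blast
    have "degree (map_poly \<phi> p) > 0" using emb_degree[OF e p(1)] monic_root_degree[OF p(2,3)] by simp
    with closed obtain b where "poly (map_poly \<phi> p) b = 0" by blast
    from ext_step[OF e p this] obtain R' \<phi>' where e': "emb R' \<phi>'" "R \<subseteq> R'" "a \<in> R'"
      "\<forall>x\<in>R. \<phi>' x = \<phi> x" "\<phi>' a = b" by blast
    have "good R' \<phi>'" using e' g by (auto simp: good_def)
    hence "gr R' \<phi>' \<in> A" unfolding A_def by blast
    moreover have "M \<subseteq> gr R' \<phi>'" using g e' by (auto simp: gr_def)
    ultimately have "gr R' \<phi>' = M" using M(2) by blast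
    moreover have "(a, \<phi>' a) \<in> gr R' \<phi>'" using e'(3) by (simp add: gr_mem)
    ultimately have "(a, \<phi>' a) \<in> gr R \<phi>" using g by simp
    thus False using aR by (simp add: gr_mem)
  qed
  have inj: "inj \<phi>" using emb_inj[OF e] RU by (auto intro: injI)
  have surj: "surj \<phi>"
  proof -
    {
      fix y
      from alg obtain g0 where g0: "g0 \<noteq> 0" "poly_over K g0" "poly g0 y = 0" by blast
      define Z where "Z = {z. poly g0 z = 0}"
      have fin: "finite Z" unfolding Z_def using poly_roots_finite[OF g0(1)] .
      have mg: "map_poly \<phi> g0 = g0" using emb_fix_poly[OF e fixK' g0(2)] .
      have "\<phi> ` Z \<subseteq> Z"
      proof
        fix w assume "w \<in> \<phi> ` Z"
        then obtain z where z: "z \<in> Z" "w = \<phi> z" by blast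
        have "\<phi> (poly g0 z) = poly (map_poly \<phi> g0) (\<phi> z)"
          using emb_poly[OF e po_mono[OF emb_K[OF e] g0(2)]] RU by simp
        thus "w \<in> Z" using z mg emb_0[OF e] by (simp add: Z_def)
      qed
      moreover have "card (\<phi> ` Z) = card Z" using card_image[of \<phi> Z] inj by (simp add: inj_on_def inj_def)
      ultimately have "\<phi> ` Z = Z" using fin by (simp add: card_subset_eq)
      moreover have "y \<in> Z" using g0 by (simp add: Z_def)
      ultimately have "y \<in> range \<phi>" by blast
    }
    thus ?thesis by blast
  qed
  have "field_aut \<phi>" unfolding field_aut_def
    using inj surj emb_1[OF e] emb_add[OF e] emb_mult[OF e] RU by (auto simp: bij_def)
  moreover have "\<forall>x\<in>R0. \<phi> x = \<phi>0 x" using g by (simp add: good_def)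
  ultimately show ?thesis by blast
qed


lemma move_aut:
  assumes F: "is_subfield F" "K \<subseteq> F" and xF: "x \<notin> F"
    and g: "g \<noteq> 0" "poly_over F g" "poly g x = 0" "\<not> [:-x, 1:] ^ 2 dvd g"
  shows "\<exists>\<sigma>. field_aut \<sigma> \<and> (\<forall>z\<in>F. \<sigma> z = z) \<and> \<sigma> x \<noteq> x"
proof -
  from minpoly_exists[OF F(1) g(1-3)] obtain p where p: "poly_over F p" "lead_coeff p = 1"
    "poly p x = 0" "\<And>q. poly_over F q \<Longrightarrow> poly q x = 0 \<Longrightarrow> \<exists>s. poly_over F s \<and> q = p * s" by blast
  from p(4)[OF g(2,3)] obtain s where s: "g = p * s" by blast
  have d0: "degree p > 0" using monic_root_degree[OF p(2,3)] .
  have d1: "degree p \<noteq> 1" using monic_deg1_root[OF F(1) p(1,2) _ p(3)] xF by blast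
  from p(3) obtain p1 where p1: "p = [:-x, 1:] * p1" by (metis poly_eq_0_iff_dvd dvdE)
  have p1nz: "p1 \<noteq> 0" using p1 d0 by auto
  have "degree p = degree [:-x, 1:] + degree p1" unfolding p1 using p1nz by (intro degree_mult_eq) auto
  hence "degree p = Suc (degree p1)" by simp
  hence "degree p1 > 0" using d1 by simp
  with closed obtain y where y: "poly p1 y = 0" by blast
  have yx: "y \<noteq> x"
  proof
    assume "y = x"
    hence "[:-x, 1:] dvd p1" using y by (simp add: poly_eq_0_iff_dvd)
    hence "[:-x, 1:] * [:-x, 1:] dvd [:-x, 1:] * p1" by (rule mult_dvd_mono[OF dvd_refl])
    hence "[:-x, 1:] ^ 2 dvd p" unfolding p1 power2_eq_square .
    hence "[:-x, 1:] ^ 2 dvd g" using s by simp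
    thus False using g(4) by simp
  qed
  have py: "poly p y = 0" using p1 y by simp
  have e: "emb F id" unfolding emb_def using F by simp
  from ext_step[OF e p(1-4)] py obtain R' \<phi>' where e': "emb R' \<phi>'" "F \<subseteq> R'" "x \<in> R'"
    "\<forall>z\<in>F. \<phi>' z = z" "\<phi>' x = y" by fastforce
  have "\<forall>z\<in>K. \<phi>' z = z" using e' F(2) by auto
  from extend_aut[OF e'(1) this] obtain \<sigma> where "field_aut \<sigma>" "\<forall>z\<in>R'. \<sigma> z = \<phi>' z" by blast
  thus ?thesis using e' yx by (intro exI[of _ \<sigma>]) auto
qed

end



lemma dbl_root_pderiv:
  fixes g :: "'a::field poly"
  assumes "[:-z, 1:] ^ 2 dvd g" shows "[:-z, 1:] dvd pderiv g"
proof -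
  define L where "L = [:-z, 1::'a:]"
  from assms obtain h where h: "g = L * L * h" unfolding L_def power2_eq_square by (elim dvdE)
  have dL: "pderiv L = 1" unfolding L_def by (simp add: pderiv_pCons)
  have "pderiv g = L * L * pderiv h + h * (L * 1 + L * 1)"
    unfolding h pderiv_mult dL by simp
  also have "\<dots> = L * (L * pderiv h + h * 1 + h * 1)" by (simp only: distrib_left mult.assoc mult.left_commute[of h L] add.assoc)
  finally have "L dvd pderiv g" by (rule dvdI)
  thus ?thesis unfolding L_def .
qed

lemma linear_not_unit: "\<not> is_unit [:-z, 1::'a::field:]"
proof
  assume "is_unit [:-z, 1::'a:]"
  hence "degree [:-z, 1::'a:] = 0" by (simp add: is_unit_iff_degree)
  thus False by simp
qed

lemma coprime_nodbl:
  fixes f :: "'a::field poly"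
  assumes "coprime f (pderiv f)" shows "\<not> [:-z, 1:] ^ 2 dvd f"
proof
  assume a: "[:-z, 1:] ^ 2 dvd f"
  have "[:-z, 1:] dvd [:-z, 1::'a:] ^ 2" by (simp only: power2_eq_square) (rule dvd_triv_left)
  hence "[:-z, 1:] dvd f" using a by (rule dvd_trans)
  moreover have "[:-z, 1:] dvd pderiv f" using dbl_root_pderiv[OF a] .
  ultimately show False using coprime_common_divisor[OF assms] linear_not_unit by blast
qed

lemma dvd_by_roots:
  fixes g p :: "'a::field poly"
  assumes closed: "\<forall>p::'a poly. degree p > 0 \<longrightarrow> (\<exists>x. poly p x = 0)"
    and "g \<noteq> 0" "\<forall>z. \<not> [:-z, 1:] ^ 2 dvd g" "\<forall>w. poly g w = 0 \<longrightarrow> poly p w = 0"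
  shows "g dvd p"
  using assms(2-4)
proof (induction "degree g" arbitrary: g p rule: less_induct)
  case less
  show ?case
  proof (cases "degree g = 0")
    case True
    then obtain c where "g = [:c:]" by (metis degree_eq_zeroE)
    with less.prems have "is_unit g" by (simp add: is_unit_iff_degree)
    thus ?thesis by (rule unit_imp_dvd)
  next
    case False
    with closed obtain w where w: "poly g w = 0" by blast
    then obtain g1 where g1: "g = [:-w, 1:] * g1" by (metis poly_eq_0_iff_dvd dvdE)
    from less.prems(3) w have "poly p w = 0" by blast
    then obtain p1 where p1: "p = [:-w, 1:] * p1" by (metis poly_eq_0_iff_dvd dvdE)
    have g1nz: "g1 \<noteq> 0" using g1 less.prems(1) by auto
    have dg: "degree g = Suc (degree g1)"
      unfolding g1 using g1nz by (subst degree_mult_eq) auto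
    have nodbl: "\<forall>z. \<not> [:-z, 1:] ^ 2 dvd g1"
      using less.prems(2) g1 by (metis dvd_mult)
    have "poly g1 w \<noteq> 0"
    proof
      assume "poly g1 w = 0"
      hence "[:-w, 1:] dvd g1" by (simp add: poly_eq_0_iff_dvd)
      hence "[:-w, 1:] * [:-w, 1:] dvd [:-w, 1:] * g1" by (rule mult_dvd_mono[OF dvd_refl])
      thus False using less.prems(2) g1 by (simp add: power2_eq_square)
    qed
    have roots: "\<forall>z. poly g1 z = 0 \<longrightarrow> poly p1 z = 0"
    proof (intro allI impI)
      fix z assume z: "poly g1 z = 0"
      hence zw: "z \<noteq> w" using \<open>poly g1 w \<noteq> 0\<close> by auto
      have "poly p z = 0" using less.prems(3) z g1 by simp
      thus "poly p1 z = 0" using p1 zw by simp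
    qed
    from less.hyps[of g1 p1] dg g1nz nodbl roots have "g1 dvd p1" by simp
    thus ?thesis unfolding g1 p1 by (rule mult_dvd_mono[OF dvd_refl])
  qed
qed

lemma interp_exists:
  fixes S :: "'a::field set"
  assumes "finite S" shows "\<exists>q. \<forall>w\<in>S. poly q w = v w"
  using assms
proof (induction S rule: finite_induct)
  case empty thus ?case by simp
next
  case (insert a S)
  from insert.IH obtain q where q: "\<forall>w\<in>S. poly q w = v w" by blast
  define P where "P = (\<Prod>b\<in>S. [:-b, 1:])"
  have Pb: "poly P w = 0" if "w \<in> S" for w
    unfolding P_def poly_prod using insert.hyps(1) that by (auto intro: prod_zero)
  have Pa: "poly P a \<noteq> 0"
    unfolding P_def poly_prod using insert.hyps by (auto simp: prod_zero_iff)
  define q' where "q' = q + smult ((v a - poly q a) / poly P a) P"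
  have "\<forall>w\<in>insert a S. poly q' w = v w"
    using q Pb Pa by (auto simp: q'_def)
  thus ?case by blast
qed


section \<open>Field automorphisms acting on polynomials\<close>

lemma aut_add: "field_aut \<sigma> \<Longrightarrow> \<sigma> (x + y) = \<sigma> x + \<sigma> y" by (simp add: field_aut_def)
lemma aut_mult: "field_aut \<sigma> \<Longrightarrow> \<sigma> (x * y) = \<sigma> x * \<sigma> y" by (simp add: field_aut_def)
lemma aut_1: "field_aut \<sigma> \<Longrightarrow> \<sigma> 1 = 1" by (simp add: field_aut_def)
lemma aut_bij: "field_aut \<sigma> \<Longrightarrow> bij \<sigma>" by (simp add: field_aut_def)
lemma aut_0: "field_aut \<sigma> \<Longrightarrow> \<sigma> 0 = 0"
proof -
  assume a: "field_aut \<sigma>"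
  have "\<sigma> 0 + \<sigma> 0 = 0 + \<sigma> 0" using aut_add[OF a, of 0 0] by simp
  thus ?thesis by (metis add_right_cancel)
qed
lemma aut_uminus: "field_aut \<sigma> \<Longrightarrow> \<sigma> (- x) = - \<sigma> x"
  using aut_add[of \<sigma> x "-x"] aut_0[of \<sigma>] by (simp add: eq_neg_iff_add_eq_0 add.commute)
lemma aut_diff: "field_aut \<sigma> \<Longrightarrow> \<sigma> (x - y) = \<sigma> x - \<sigma> y"
  using aut_add[of \<sigma> x "-y"] aut_uminus[of \<sigma> y] by simp
lemma aut_inj: "field_aut \<sigma> \<Longrightarrow> \<sigma> x = \<sigma> y \<longleftrightarrow> x = y"
  using aut_bij[of \<sigma>] by (auto simp: bij_def inj_def)
lemma aut_eq0: "field_aut \<sigma> \<Longrightarrow> \<sigma> x = 0 \<longleftrightarrow> x = 0"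
  using aut_inj[of \<sigma> x 0] aut_0[of \<sigma>] by simp
lemma aut_power: "field_aut \<sigma> \<Longrightarrow> \<sigma> (x ^ n) = \<sigma> x ^ n"
  by (induction n) (simp_all add: aut_1 aut_mult)
lemma aut_divide: "field_aut \<sigma> \<Longrightarrow> \<sigma> (x / y) = \<sigma> x / \<sigma> y"
proof (cases "y = 0")
  case True
  assume "field_aut \<sigma>" thus ?thesis using True by (simp add: aut_0)
next
  case False
  assume a: "field_aut \<sigma>"
  have "\<sigma> (x / y) * \<sigma> y = \<sigma> x" using aut_mult[OF a, of "x / y" y] False by simp
  moreover have "\<sigma> y \<noteq> 0" using False aut_eq0[OF a] by simp
  ultimately show ?thesis by (simp add: field_simps)
qed
lemma aut_sum: "field_aut \<sigma> \<Longrightarrow> \<sigma> (sum g I) = (\<Sum>i\<in>I. \<sigma> (g i))"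
  by (induction I rule: infinite_finite_induct) (simp_all add: aut_0 aut_add)

lemma aut_inv: "field_aut \<sigma> \<Longrightarrow> field_aut (inv \<sigma>)"
proof -
  assume a: "field_aut \<sigma>"
  have b: "bij \<sigma>" using aut_bij[OF a] .
  have si: "\<sigma> (inv \<sigma> x) = x" for x using surj_f_inv_f[OF bij_is_surj[OF b]] .
  have iss: "inv \<sigma> (\<sigma> x) = x" for x using inv_f_f[OF bij_is_inj[OF b]] .
  show ?thesis unfolding field_aut_def
  proof (intro conjI allI)
    show "bij (inv \<sigma>)" using b by (rule bij_imp_bij_inv)
    show "inv \<sigma> 1 = 1" using iss[of 1] aut_1[OF a] by simp
    fix x y
    show "inv \<sigma> (x + y) = inv \<sigma> x + inv \<sigma> y"
      using iss[of "inv \<sigma> x + inv \<sigma> y"] aut_add[OF a, of "inv \<sigma> x" "inv \<sigma> y"] si by simp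
    show "inv \<sigma> (x * y) = inv \<sigma> x * inv \<sigma> y"
      using iss[of "inv \<sigma> x * inv \<sigma> y"] aut_mult[OF a, of "inv \<sigma> x" "inv \<sigma> y"] si by simp
  qed
qed

lemma aut_coeff: "field_aut \<sigma> \<Longrightarrow> coeff (map_poly \<sigma> p) n = \<sigma> (coeff p n)"
  by (simp add: coeff_map_poly aut_0)
lemma aut_map_add: "field_aut \<sigma> \<Longrightarrow> map_poly \<sigma> (p + q) = map_poly \<sigma> p + map_poly \<sigma> q"
  by (intro poly_eqI) (simp add: aut_coeff aut_add)
lemma aut_map_diff: "field_aut \<sigma> \<Longrightarrow> map_poly \<sigma> (p - q) = map_poly \<sigma> p - map_poly \<sigma> q"
  by (intro poly_eqI) (simp add: aut_coeff aut_diff)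
lemma aut_map_mult: "field_aut \<sigma> \<Longrightarrow> map_poly \<sigma> (p * q) = map_poly \<sigma> p * map_poly \<sigma> q"
  by (intro poly_eqI) (simp add: aut_coeff coeff_mult aut_sum aut_mult)
lemma aut_map_pCons: "field_aut \<sigma> \<Longrightarrow> map_poly \<sigma> (pCons a p) = pCons (\<sigma> a) (map_poly \<sigma> p)"
  by (simp add: map_poly_pCons aut_0)
lemma aut_poly: "field_aut \<sigma> \<Longrightarrow> \<sigma> (poly p x) = poly (map_poly \<sigma> p) (\<sigma> x)"
  by (induction p) (simp_all add: aut_map_pCons aut_0 aut_add aut_mult)
lemma aut_degree: "field_aut \<sigma> \<Longrightarrow> degree (map_poly \<sigma> p) = degree p"
proof (cases "p = 0")
  case False
  assume a: "field_aut \<sigma>"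
  have "coeff (map_poly \<sigma> p) (degree p) \<noteq> 0" using False by (simp add: aut_coeff[OF a] aut_eq0[OF a])
  hence "degree p \<le> degree (map_poly \<sigma> p)" by (rule le_degree)
  thus ?thesis using map_poly_degree_leq[of \<sigma> p] by simp
qed simp
lemma aut_map_eq0: "field_aut \<sigma> \<Longrightarrow> map_poly \<sigma> p = 0 \<longleftrightarrow> p = 0"
  by (metis aut_coeff aut_eq0 leading_coeff_0_iff aut_degree)
lemma aut_map_dvd: "field_aut \<sigma> \<Longrightarrow> f dvd p \<Longrightarrow> map_poly \<sigma> f dvd map_poly \<sigma> p"
  by (metis aut_map_mult dvd_def)
lemma aut_map_inv: "field_aut \<sigma> \<Longrightarrow> map_poly \<sigma> (map_poly (inv \<sigma>) p) = p"
proof -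
  assume a: "field_aut \<sigma>"
  have "map_poly \<sigma> (map_poly (inv \<sigma>) p) = map_poly (\<sigma> \<circ> inv \<sigma>) p"
    by (rule map_poly_map_poly) (simp_all add: aut_0[OF a] aut_0[OF aut_inv[OF a]])
  also have "\<sigma> \<circ> inv \<sigma> = id" by (rule ext) (simp add: surj_f_inv_f[OF bij_is_surj[OF aut_bij[OF a]]])
  finally show ?thesis by simp
qed
lemma aut_map_inv2: "field_aut \<sigma> \<Longrightarrow> map_poly (inv \<sigma>) (map_poly \<sigma> p) = p"
proof -
  assume a: "field_aut \<sigma>"
  have "map_poly (inv \<sigma>) (map_poly \<sigma> p) = map_poly (inv \<sigma> \<circ> \<sigma>) p"
    by (rule map_poly_map_poly) (simp_all add: aut_0[OF a] aut_0[OF aut_inv[OF a]])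
  also have "inv \<sigma> \<circ> \<sigma> = id" by (rule ext) (simp add: inv_f_f[OF bij_is_inj[OF aut_bij[OF a]]])
  finally show ?thesis by simp
qed
lemma aut_fix_poly: "field_aut \<sigma> \<Longrightarrow> (\<forall>i. \<sigma> (coeff p i) = coeff p i) \<Longrightarrow> map_poly \<sigma> p = p"
  by (intro poly_eqI) (simp add: aut_coeff)


section \<open>The lines\<close>

locale lsetup =
  fixes f d :: "'a::field poly" and r :: "'a \<Rightarrow> 'a"
  assumes closed: "\<forall>p::'a poly. degree p > 0 \<longrightarrow> (\<exists>x. poly p x = 0)"
    and f_nz: "f \<noteq> 0" and nodbl: "\<forall>z. \<not> [:-z, 1:] ^ 2 dvd f"
    and three: "3 \<le> card {w. poly f w = 0}"
    and d_nz: "\<forall>w. poly f w = 0 \<longrightarrow> poly d w \<noteq> 0"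
    and sq: "\<forall>w. poly f w = 0 \<longrightarrow> r w ^ 2 = poly d w"
    and two: "(2::'a) \<noteq> 0"
begin

abbreviation "Om \<equiv> {w. poly f w = 0}"

lemma fin: "finite Om" using poly_roots_finite[OF f_nz] .

lemma r_nz: "w \<in> Om \<Longrightarrow> r w \<noteq> 0"
  using sq d_nz by fastforce

lemma dvd_iff: "f dvd p \<longleftrightarrow> (\<forall>w\<in>Om. poly p w = 0)"
proof
  assume "f dvd p" thus "\<forall>w\<in>Om. poly p w = 0" by (auto elim!: dvdE)
next
  assume "\<forall>w\<in>Om. poly p w = 0"
  thus "f dvd p" using dvd_by_roots[OF closed f_nz nodbl] by auto
qed

lemma mod_eq_iff: "p mod f = q mod f \<longleftrightarrow> (\<forall>w\<in>Om. poly p w = poly q w)"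
  by (simp add: mod_eq_dvd_iff dvd_iff)

lemma red_unique: "q1 mod f = q1 \<Longrightarrow> q2 mod f = q2 \<Longrightarrow> \<forall>w\<in>Om. poly q1 w = poly q2 w \<Longrightarrow> q1 = q2"
  using mod_eq_iff[of q1 q2] by simp

lemma interp: "\<exists>q. q mod f = q \<and> (\<forall>w\<in>Om. poly q w = v w)"
proof -
  from interp_exists[OF fin] obtain q0 where q0: "\<forall>w\<in>Om. poly q0 w = v w" by blast
  have "(q0 mod f) mod f = q0 mod f" by simp
  moreover have "\<forall>w\<in>Om. poly (q0 mod f) w = v w"
    using mod_eq_iff[of "q0 mod f" q0] q0 by simp
  ultimately show ?thesis by blast
qed

lemma line_mem: "q \<in> line_of f e \<longleftrightarrow> q mod f = q \<and> (\<exists>s t. \<forall>w\<in>Om. poly e w * poly q w = t + s * w)"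
  unfolding line_of_def mem_Collect_eq mod_eq_iff by (simp add: mult.commute)

lemma sqroot_iff: "(e * e) mod f = d mod f \<longleftrightarrow> (\<forall>w\<in>Om. poly e w ^ 2 = poly d w)"
  unfolding mod_eq_iff by (simp add: power2_eq_square)

lemma line_sub:
  assumes "\<forall>w\<in>Om. poly e' w = c * poly e w" shows "line_of f e \<subseteq> line_of f e'"
proof
  fix q assume "q \<in> line_of f e"
  then obtain s t where st: "q mod f = q" "\<forall>w\<in>Om. poly e w * poly q w = t + s * w"
    unfolding line_mem by blast
  have "\<forall>w\<in>Om. poly e' w * poly q w = c * t + (c * s) * w"
    using st(2) assms by (auto simp: algebra_simps)
  thus "q \<in> line_of f e'" unfolding line_mem using st(1) by blast
qed

lemma line_eq_iff:
  assumes nz: "\<forall>w\<in>Om. poly e w \<noteq> 0" "\<forall>w\<in>Om. poly e' w \<noteq> 0"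
  shows "line_of f e = line_of f e' \<longleftrightarrow> (\<exists>c. \<forall>w\<in>Om. poly e' w = c * poly e w)"
proof
  assume "\<exists>c. \<forall>w\<in>Om. poly e' w = c * poly e w"
  then obtain c where c: "\<forall>w\<in>Om. poly e' w = c * poly e w" by blast
  have "\<forall>w\<in>Om. poly e w = inverse c * poly e' w"
  proof
    fix w assume "w \<in> Om"
    hence "c \<noteq> 0" using c nz by auto
    thus "poly e w = inverse c * poly e' w" using c \<open>w \<in> Om\<close> by simp
  qed
  thus "line_of f e = line_of f e'" using line_sub c by blast
next
  assume eq: "line_of f e = line_of f e'"
  obtain q1 where q1: "q1 mod f = q1" "\<forall>w\<in>Om. poly q1 w = 1 / poly e w" using interp[of "\<lambda>w. 1 / poly e w"] by blast
  obtain q2 where q2: "q2 mod f = q2" "\<forall>w\<in>Om. poly q2 w = w / poly e w" using interp[of "\<lambda>w. w / poly e w"] by blast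
  have "q1 \<in> line_of f e" unfolding line_mem using q1 nz
    by (intro conjI exI[of _ 0] exI[of _ 1]) auto
  hence "q1 \<in> line_of f e'" using eq by simp
  then obtain s1 t1 where st1: "\<forall>w\<in>Om. poly e' w * poly q1 w = t1 + s1 * w"
    unfolding line_mem by blast
  have "q2 \<in> line_of f e" unfolding line_mem using q2 nz
    by (intro conjI exI[of _ 1] exI[of _ 0]) auto
  hence "q2 \<in> line_of f e'" using eq by simp
  then obtain s2 t2 where st2: "\<forall>w\<in>Om. poly e' w * poly q2 w = t2 + s2 * w"
    unfolding line_mem by blast
  have rel: "poly e' w = (t1 + s1 * w) * poly e w" if "w \<in> Om" for w
    using st1 q1 nz that by (auto simp: field_simps)
  define P where "P = [:- t2, t1 - s2, s1:]"
  have "poly P w = 0" if "w \<in> Om" for w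
  proof -
    have "poly e' w * poly q2 w = (t1 + s1 * w) * w" using rel[OF that] q2 nz that by (auto simp: field_simps)
    hence "(t1 + s1 * w) * w = t2 + s2 * w" using st2 that by simp
    thus ?thesis unfolding P_def by (simp add: algebra_simps)
  qed
  hence "Om \<subseteq> {w. poly P w = 0}" by blast
  have "P = 0"
  proof (rule ccontr)
    assume "P \<noteq> 0"
    hence "card {w. poly P w = 0} \<le> degree P" by (rule card_poly_roots_bound)
    moreover have "degree P \<le> 2" unfolding P_def by simp
    moreover have "card Om \<le> card {w. poly P w = 0}"
      using \<open>Om \<subseteq> _\<close> poly_roots_finite[OF \<open>P \<noteq> 0\<close>] by (rule card_mono[rotated])
    ultimately show False using three by simp
  qed
  hence "s1 = 0" unfolding P_def by simp
  thus "\<exists>c. \<forall>w\<in>Om. poly e' w = c * poly e w" using rel by auto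
qed

lemma aut_Om: "field_aut \<sigma> \<Longrightarrow> map_poly \<sigma> f = f \<Longrightarrow> w \<in> Om \<Longrightarrow> \<sigma> w \<in> Om"
  using aut_poly[of \<sigma> f w] aut_0[of \<sigma>] by simp

lemma aut_line_sub:
  assumes a: "field_aut \<sigma>" and sf: "map_poly \<sigma> f = f"
  shows "map_poly \<sigma> ` line_of f e \<subseteq> line_of f (map_poly \<sigma> e)"
proof
  fix p assume "p \<in> map_poly \<sigma> ` line_of f e"
  then obtain q where q: "p = map_poly \<sigma> q" "q \<in> line_of f e" by blast
  from q(2) obtain s t where st: "q mod f = q" "(e * q) mod f = [:t, s:] mod f"
    unfolding line_of_def by blast
  have "q = 0 \<or> degree q < degree f" using st(1) degree_mod_less[OF f_nz, of q] by metis
  hence "p = 0 \<or> degree p < degree f" using q(1) aut_degree[OF a] by auto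
  hence p1: "p mod f = p" by (auto intro: mod_poly_less)
  have "f dvd e * q - [:t, s:]" using st(2) by (simp add: mod_eq_dvd_iff)
  hence "map_poly \<sigma> f dvd map_poly \<sigma> (e * q - [:t, s:])" by (rule aut_map_dvd[OF a])
  hence "f dvd map_poly \<sigma> e * p - [:\<sigma> t, \<sigma> s:]"
    using sf q(1) by (simp add: aut_map_diff[OF a] aut_map_mult[OF a] aut_map_pCons[OF a] aut_0[OF a])
  hence "(map_poly \<sigma> e * p) mod f = [:\<sigma> t, \<sigma> s:] mod f" by (simp add: mod_eq_dvd_iff)
  thus "p \<in> line_of f (map_poly \<sigma> e)" unfolding line_of_def using p1 by blast
qed

lemma aut_line:
  assumes a: "field_aut \<sigma>" and sf: "map_poly \<sigma> f = f"
  shows "map_poly \<sigma> ` line_of f e = line_of f (map_poly \<sigma> e)"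
proof
  show "map_poly \<sigma> ` line_of f e \<subseteq> line_of f (map_poly \<sigma> e)" by (rule aut_line_sub[OF a sf])
  have a': "field_aut (inv \<sigma>)" by (rule aut_inv[OF a])
  have sf'': "map_poly (inv \<sigma>) f = f"
    using aut_map_inv2[OF a, of f] sf by simp
  show "line_of f (map_poly \<sigma> e) \<subseteq> map_poly \<sigma> ` line_of f e"
  proof
    fix p assume p: "p \<in> line_of f (map_poly \<sigma> e)"
    have ie: "map_poly (inv \<sigma>) (map_poly \<sigma> e) = e" by (rule aut_map_inv2[OF a])
    have "map_poly (inv \<sigma>) p \<in> line_of f e"
      using aut_line_sub[OF a' sf''] p ie by force
    moreover have "p = map_poly \<sigma> (map_poly (inv \<sigma>) p)" using aut_map_inv[OF a] by simp
    ultimately show "p \<in> map_poly \<sigma> ` line_of f e" by blast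
  qed
qed


lemma sqroot_nz: "(e * e) mod f = d mod f \<Longrightarrow> w \<in> Om \<Longrightarrow> poly e w \<noteq> 0"
  using sqroot_iff d_nz by fastforce

lemma aut_fixes_line:
  assumes a: "field_aut \<sigma>" and sf: "map_poly \<sigma> f = f" and e: "(e * e) mod f = d mod f"
  shows "map_poly \<sigma> ` line_of f e = line_of f e \<longleftrightarrow>
          (\<exists>c. \<forall>w\<in>Om. \<sigma> (poly e w) = c * poly e (\<sigma> w))"
proof -
  have nz: "\<forall>w\<in>Om. poly e w \<noteq> 0" using sqroot_nz[OF e] by blast
  have nz': "\<forall>w\<in>Om. poly (map_poly \<sigma> e) w \<noteq> 0"
  proof
    fix w assume w: "w \<in> Om"
    define u where "u = inv \<sigma> w"
    have wu: "w = \<sigma> u" unfolding u_def using surj_f_inv_f[OF bij_is_surj[OF aut_bij[OF a]]] by simp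
    have "u \<in> Om"
      using aut_Om[OF aut_inv[OF a] aut_map_inv2[OF a, of f, unfolded sf] w] unfolding u_def .
    hence "poly e u \<noteq> 0" using nz by blast
    hence "\<sigma> (poly e u) \<noteq> 0" using aut_eq0[OF a] by blast
    thus "poly (map_poly \<sigma> e) w \<noteq> 0" unfolding wu aut_poly[OF a, of e u, symmetric] .
  qed
  have "map_poly \<sigma> ` line_of f e = line_of f e \<longleftrightarrow> line_of f e = line_of f (map_poly \<sigma> e)"
    using aut_line[OF a sf] by auto
  also have "\<dots> \<longleftrightarrow> (\<exists>c. \<forall>w\<in>Om. poly (map_poly \<sigma> e) w = c * poly e w)"
    by (rule line_eq_iff[OF nz nz'])
  also have "\<dots> \<longleftrightarrow> (\<exists>c. \<forall>w\<in>Om. \<sigma> (poly e w) = c * poly e (\<sigma> w))"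
  proof -
    have "(\<forall>w\<in>Om. poly (map_poly \<sigma> e) w = c * poly e w) \<longleftrightarrow>
          (\<forall>w\<in>Om. \<sigma> (poly e w) = c * poly e (\<sigma> w))" for c
    proof
      assume h: "\<forall>w\<in>Om. poly (map_poly \<sigma> e) w = c * poly e w"
      show "\<forall>w\<in>Om. \<sigma> (poly e w) = c * poly e (\<sigma> w)"
      proof
        fix w assume "w \<in> Om"
        hence "\<sigma> w \<in> Om" by (rule aut_Om[OF a sf])
        with h have "poly (map_poly \<sigma> e) (\<sigma> w) = c * poly e (\<sigma> w)" by blast
        thus "\<sigma> (poly e w) = c * poly e (\<sigma> w)" unfolding aut_poly[OF a, of e w] .
      qed
    next
      assume h: "\<forall>w\<in>Om. \<sigma> (poly e w) = c * poly e (\<sigma> w)"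
      show "\<forall>w\<in>Om. poly (map_poly \<sigma> e) w = c * poly e w"
      proof
        fix w assume w: "w \<in> Om"
        define u where "u = inv \<sigma> w"
        have wu: "w = \<sigma> u" unfolding u_def using surj_f_inv_f[OF bij_is_surj[OF aut_bij[OF a]]] by simp
        have "u \<in> Om"
          using aut_Om[OF aut_inv[OF a] aut_map_inv2[OF a, of f, unfolded sf] w] unfolding u_def .
        with h have "\<sigma> (poly e u) = c * poly e (\<sigma> u)" by blast
        thus "poly (map_poly \<sigma> e) w = c * poly e w" unfolding wu aut_poly[OF a, of e u] .
      qed
    qed
    thus ?thesis by simp
  qed
  finally show ?thesis .
qed

lemma dirA:
  assumes a: "field_aut \<sigma>" and sf: "map_poly \<sigma> f = f" and sd: "map_poly \<sigma> d = d"
    and fixO: "\<forall>w\<in>Om. \<sigma> w = w"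
    and fixP: "\<forall>w\<in>Om. \<forall>v\<in>Om. \<sigma> (r w * r v) = r w * r v"
  shows "\<forall>Y\<in>Lambda_lines f d. map_poly \<sigma> ` Y = Y"
proof
  fix Y assume "Y \<in> Lambda_lines f d"
  then obtain e where Y: "Y = line_of f e" and e: "(e * e) mod f = d mod f"
    unfolding Lambda_lines_def by blast
  have ev: "\<forall>w\<in>Om. poly e w ^ 2 = poly d w" using e sqroot_iff by blast
  have nz: "\<forall>w\<in>Om. poly e w \<noteq> 0" using sqroot_nz[OF e] by blast
  have "Om \<noteq> {}" using three by (intro notI) simp
  then obtain w0 where w0: "w0 \<in> Om" by blast
  define c where "c = \<sigma> (poly e w0) / poly e w0"
  have sd0: "\<sigma> (poly d w) = poly d w" if "w \<in> Om" for w
    using aut_poly[OF a, of d w] sd fixO that by simp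
  have se0: "\<sigma> (poly e w0) \<noteq> 0" using nz w0 aut_eq0[OF a] by blast
  have sq0: "\<sigma> (poly e w0) ^ 2 = poly e w0 ^ 2"
    using aut_power[OF a, of "poly e w0" 2] ev w0 sd0[OF w0] by simp
  have "\<forall>w\<in>Om. \<sigma> (poly e w) = c * poly e (\<sigma> w)"
  proof
    fix w assume w: "w \<in> Om"
    have "(poly e w * poly e w0) ^ 2 = (r w * r w0) ^ 2"
      using ev w w0 sq by (simp add: power_mult_distrib)
    hence "poly e w * poly e w0 = r w * r w0 \<or> poly e w * poly e w0 = - (r w * r w0)"
      by (simp add: power2_eq_iff)
    hence "\<sigma> (poly e w * poly e w0) = poly e w * poly e w0"
      using fixP w w0 aut_uminus[OF a] by auto
    hence m: "\<sigma> (poly e w) * \<sigma> (poly e w0) = poly e w * poly e w0" using aut_mult[OF a] by simp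
    have "\<sigma> (poly e w) = poly e w * poly e w0 / \<sigma> (poly e w0)" using m se0 by (simp add: eq_divide_eq)
    also have "\<dots> = c * poly e w"
    proof -
      have ne0: "poly e w0 \<noteq> 0" using nz w0 by blast
      have "poly e w0 * poly e w0 = \<sigma> (poly e w0) * \<sigma> (poly e w0)" using sq0 by (simp add: power2_eq_square)
      thus ?thesis unfolding c_def using ne0 se0 by (simp add: divide_simps)
    qed
    finally show "\<sigma> (poly e w) = c * poly e (\<sigma> w)" using fixO w by simp
  qed
  thus "map_poly \<sigma> ` Y = Y" unfolding Y using aut_fixes_line[OF a sf e] by blast
qed


lemma dirB:
  assumes a: "field_aut \<sigma>" and sf: "map_poly \<sigma> f = f" and sd: "map_poly \<sigma> d = d"
    and fixL: "\<forall>Y\<in>Lambda_lines f d. map_poly \<sigma> ` Y = Y"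
  shows "(\<forall>w\<in>Om. \<sigma> w = w) \<and> (\<forall>w\<in>Om. \<forall>v\<in>Om. \<sigma> (r w * r v) = r w * r v)"
proof -
  have key: "\<exists>c. \<forall>w\<in>Om. \<sigma> (poly e w) = c * poly e (\<sigma> w)" if e: "(e * e) mod f = d mod f" for e
  proof -
    have "line_of f e \<in> Lambda_lines f d" unfolding Lambda_lines_def using e by blast
    with fixL have "map_poly \<sigma> ` line_of f e = line_of f e" by blast
    thus ?thesis using aut_fixes_line[OF a sf e] by blast
  qed
  have inj: "\<sigma> x = \<sigma> y \<longleftrightarrow> x = y" for x y using aut_inj[OF a] .
  obtain e1 where e1: "e1 mod f = e1" "\<forall>w\<in>Om. poly e1 w = r w" using interp[of r] by blast
  have e1s: "(e1 * e1) mod f = d mod f" unfolding sqroot_iff using e1 sq by simp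
  from key[OF e1s] obtain c1 where c1: "\<forall>w\<in>Om. \<sigma> (poly e1 w) = c1 * poly e1 (\<sigma> w)" by blast
  have fixO: "\<forall>w\<in>Om. \<sigma> w = w"
  proof (rule ccontr)
    assume "\<not> (\<forall>w\<in>Om. \<sigma> w = w)"
    then obtain w0 where w0: "w0 \<in> Om" "\<sigma> w0 \<noteq> w0" by blast
    define w1 where "w1 = \<sigma> w0"
    have w1: "w1 \<in> Om" "w1 \<noteq> w0" using aut_Om[OF a sf w0(1)] w0(2) unfolding w1_def by auto
    have "\<exists>w2\<in>Om. w2 \<noteq> w0 \<and> w2 \<noteq> w1"
    proof (rule ccontr)
      assume "\<not> ?thesis"
      hence "Om \<subseteq> {w0, w1}" by blast
      hence "card Om \<le> card {w0, w1}" by (rule card_mono[rotated]) simp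
      also have "\<dots> \<le> 2" by (simp add: card_insert_if)
      finally show False using three by simp
    qed
    then obtain w2 where w2: "w2 \<in> Om" "w2 \<noteq> w0" "w2 \<noteq> w1" by blast
    have sw2: "\<sigma> w2 \<in> Om" "\<sigma> w2 \<noteq> w1" using aut_Om[OF a sf w2(1)] w2(2) inj unfolding w1_def by auto
    obtain e2 where e2: "e2 mod f = e2" "\<forall>w\<in>Om. poly e2 w = (if w = w1 then - r w else r w)"
      using interp[of "\<lambda>w. if w = w1 then - r w else r w"] by blast
    have e2s: "(e2 * e2) mod f = d mod f" unfolding sqroot_iff using e2 sq by simp
    from key[OF e2s] obtain c2 where c2: "\<forall>w\<in>Om. \<sigma> (poly e2 w) = c2 * poly e2 (\<sigma> w)" by blast
    have i: "\<sigma> (r w0) = c1 * r w1" using c1 w0(1) e1(2) w1(1) unfolding w1_def by auto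
    have ii: "\<sigma> (r w0) = c2 * (- r w1)" using c2 w0(1) e2(2) w1 unfolding w1_def by auto
    have iii: "\<sigma> (r w2) = c1 * r (\<sigma> w2)" using c1 w2(1) e1(2) sw2(1) by auto
    have iv: "\<sigma> (r w2) = c2 * r (\<sigma> w2)" using c2 w2 e2(2) sw2 by auto
    have "c1 * r w1 = - (c2 * r w1)" using i ii by simp
    hence "(c1 + c2) * r w1 = 0" by (simp add: distrib_right eq_neg_iff_add_eq_0)
    hence c2e: "c2 = - c1" using r_nz[OF w1(1)] by (simp add: add_eq_0_iff)
    have "c1 * r (\<sigma> w2) = - (c1 * r (\<sigma> w2))" using iii iv c2e by simp
    hence "c1 * r (\<sigma> w2) + c1 * r (\<sigma> w2) = 0" by (simp only: eq_neg_iff_add_eq_0)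
    hence "(2 * c1) * r (\<sigma> w2) = 0" by (simp only: mult_2 distrib_right)
    hence "c1 = 0" using r_nz[OF sw2(1)] two by simp
    hence "\<sigma> (r w0) = 0" using i by simp
    hence "r w0 = 0" using aut_eq0[OF a] by blast
    thus False using r_nz[OF w0(1)] by blast
  qed
  have sr: "\<forall>w\<in>Om. \<sigma> (r w) = c1 * r w" using c1 e1(2) fixO by auto
  have "Om \<noteq> {}" using three by (intro notI) simp
  then obtain w0 where w0: "w0 \<in> Om" by blast
  have "\<sigma> (r w0 ^ 2) = r w0 ^ 2"
    using aut_poly[OF a, of d w0] sd fixO w0 sq by simp
  hence "(c1 * r w0) ^ 2 = r w0 ^ 2" using sr w0 aut_power[OF a] by simp
  hence "c1 ^ 2 * r w0 ^ 2 = 1 * r w0 ^ 2" by (simp add: power_mult_distrib)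
  hence cc: "c1 * c1 = 1" using r_nz[OF w0] by (simp add: power2_eq_square)
  have "\<forall>w\<in>Om. \<forall>v\<in>Om. \<sigma> (r w * r v) = r w * r v"
  proof (intro ballI)
    fix w v assume "w \<in> Om" "v \<in> Om"
    hence "\<sigma> (r w * r v) = (c1 * c1) * (r w * r v)" using sr aut_mult[OF a] by (simp add: algebra_simps)
    thus "\<sigma> (r w * r v) = r w * r v" using cc by simp
  qed
  thus ?thesis using fixO by blast
qed

end




theorem lemma2p36:
  fixes k :: "'a::field set" and f d :: "'a poly" and r :: "'a \<Rightarrow> 'a"
  assumes k_field: "is_subfield k"
    and char: "(2::'a) \<noteq> 0"
    and alg_closed: "\<forall>p::'a poly. degree p > 0 \<longrightarrow> (\<exists>x. poly p x = 0)"
    and algebraic: "\<forall>x::'a. \<exists>p. p \<noteq> 0 \<and> poly_over k p \<and> poly p x = 0"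
    and f_over: "poly_over k f" and f_deg: "degree f = 6"
    and f_sep: "coprime f (pderiv f)"
    and d_over: "poly_over k d" and d_unit: "coprime d f"
    and sqrt: "\<forall>\<omega>. poly f \<omega> = 0 \<longrightarrow> r \<omega> ^ 2 = poly d \<omega>"
  shows "is_field_of_def_seq k (Lambda_lines f d)
           (field_gen (k \<union> {\<omega>. poly f \<omega> = 0} \<union>
              {r \<omega> * r \<psi> | \<omega> \<psi>. poly f \<omega> = 0 \<and> poly f \<psi> = 0}))"
proof -
  define Om where "Om = {\<omega>. poly f \<omega> = 0}"
  define P where "P = {r \<omega> * r \<psi> | \<omega> \<psi>. poly f \<omega> = 0 \<and> poly f \<psi> = 0}"
  have f_nz: "f \<noteq> 0" using f_deg by auto
  have nodbl: "\<forall>z. \<not> [:-z, 1:] ^ 2 dvd f" using coprime_nodbl[OF f_sep] by blast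
  have d_nz: "\<forall>w. poly f w = 0 \<longrightarrow> poly d w \<noteq> 0"
  proof (intro allI impI notI)
    fix w assume "poly f w = 0" "poly d w = 0"
    hence "[:-w, 1:] dvd d" "[:-w, 1:] dvd f" by (simp_all add: poly_eq_0_iff_dvd)
    thus False using coprime_common_divisor[OF d_unit] linear_not_unit by blast
  qed
  have finO: "finite Om" unfolding Om_def using poly_roots_finite[OF f_nz] .
  have three: "3 \<le> card Om"
  proof -
    define Q where "Q = (\<Prod>w\<in>Om. [:-w, 1:])"
    have Qnz: "Q \<noteq> 0" unfolding Q_def using finO by (simp add: prod_zero_iff)
    have "f dvd Q"
    proof (rule dvd_by_roots[OF alg_closed f_nz nodbl], intro allI impI)
      fix w assume "poly f w = 0"
      hence "w \<in> Om" by (simp add: Om_def)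
      thus "poly Q w = 0" unfolding Q_def poly_prod using finO by (auto intro: prod_zero)
    qed
    hence "degree f \<le> degree Q" using Qnz by (rule dvd_imp_degree_le)
    also have "\<dots> \<le> (\<Sum>w\<in>Om. degree [:-w, 1::'a:])" unfolding Q_def
      using degree_prod_sum_le[OF finO, of "\<lambda>w. [:-w, 1::'a:]"] by (simp only: o_def)
    also have "\<dots> = card Om" by simp
    finally show ?thesis using f_deg by simp
  qed
  interpret L: lsetup f d r
    by unfold_locales (use alg_closed f_nz nodbl three d_nz sqrt char in \<open>auto simp: Om_def\<close>)
  interpret A: acf k by unfold_locales (use k_field alg_closed algebraic in auto)
  define m where "m = field_gen (k \<union> Om \<union> P)"
  have m_sf: "is_subfield m" unfolding m_def by (rule field_gen_sf)
  have gen_m: "k \<union> Om \<union> P \<subseteq> m" unfolding m_def by (rule field_gen_sup)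
  have fixf: "map_poly \<sigma> f = f" "map_poly \<sigma> d = d" if "field_aut \<sigma>" "\<forall>x\<in>k. \<sigma> x = x" for \<sigma>
    using aut_fix_poly[OF that(1)] that(2) f_over d_over by (auto simp: poly_over_def)
  have fixes_m: "fixes_each m (Lambda_lines f d)" unfolding fixes_each_def
  proof (intro allI impI)
    fix \<sigma> assume s: "field_aut \<sigma> \<and> (\<forall>x\<in>m. \<sigma> x = x)"
    have sk: "\<forall>x\<in>k. \<sigma> x = x" using s gen_m by blast
    have sa: "field_aut \<sigma>" using s by blast
    show "\<forall>Y\<in>Lambda_lines f d. map_poly \<sigma> ` Y = Y"
    proof (rule L.dirA[OF sa fixf[OF sa sk]])
      show "\<forall>w\<in>L.Om. \<sigma> w = w" using s gen_m by (auto simp: Om_def)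
      show "\<forall>w\<in>L.Om. \<forall>v\<in>L.Om. \<sigma> (r w * r v) = r w * r v"
      proof (intro ballI)
        fix w v assume "w \<in> L.Om" "v \<in> L.Om"
        hence "r w * r v \<in> P" unfolding P_def by blast
        thus "\<sigma> (r w * r v) = r w * r v" using s gen_m by blast
      qed
    qed
  qed
  have minimal: "m \<subseteq> k'" if k': "is_subfield k'" "k \<subseteq> k'" "fixes_each k' (Lambda_lines f d)" for k'
  proof -
    have B: "(\<forall>w\<in>L.Om. \<sigma> w = w) \<and> (\<forall>w\<in>L.Om. \<forall>v\<in>L.Om. \<sigma> (r w * r v) = r w * r v)"
      if s: "field_aut \<sigma>" "\<forall>x\<in>k'. \<sigma> x = x" for \<sigma>
    proof -
      have sk: "\<forall>x\<in>k. \<sigma> x = x" using s k' by blast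
      have "field_aut \<sigma> \<and> (\<forall>x\<in>k'. \<sigma> x = x)" using s by (rule conjI)
      with k'(3)[unfolded fixes_each_def, THEN spec[of _ \<sigma>]]
      have "\<forall>Y\<in>Lambda_lines f d. map_poly \<sigma> ` Y = Y" by (rule mp)
      thus ?thesis by (rule L.dirB[OF s(1) fixf[OF s(1) sk]])
    qed
    have Ok: "Om \<subseteq> k'"
    proof
      fix w assume w: "w \<in> Om"
      show "w \<in> k'"
      proof (rule ccontr)
        assume wk: "w \<notin> k'"
        have "poly f w = 0" using w by (simp add: Om_def)
        from A.move_aut[OF k'(1,2) wk f_nz po_mono[OF k'(2) f_over] this nodbl[rule_format]]
        obtain \<sigma> where s: "field_aut \<sigma>" "\<forall>z\<in>k'. \<sigma> z = z" "\<sigma> w \<noteq> w" by blast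
        have "\<forall>w\<in>L.Om. \<sigma> w = w" by (rule conjunct1[OF B[OF s(1,2)]])
        moreover have "w \<in> L.Om" using w by (simp add: Om_def)
        ultimately have "\<sigma> w = w" by (rule bspec)
        thus False using s(3) by simp
      qed
    qed
    have Pk: "P \<subseteq> k'"
    proof
      fix z assume "z \<in> P"
      then obtain w v where wv: "z = r w * r v" "poly f w = 0" "poly f v = 0" unfolding P_def by blast
      show "z \<in> k'"
      proof (rule ccontr)
        assume zk: "z \<notin> k'"
        define c where "c = poly d w * poly d v"
        have "w \<in> k'" "v \<in> k'" using Ok wv by (auto simp: Om_def)
        hence ck: "c \<in> k'" unfolding c_def using k'(1) po_mono[OF k'(2) d_over]
          by (intro sf_mult poly_in_sf) auto
        define g where "g = [:- c, 0, 1:]"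
        have gk: "poly_over k' g" unfolding g_def using k'(1) ck
          by (intro po_pCons po_const sf_uminus sf_0 sf_1) auto
        have gnz: "g \<noteq> 0" unfolding g_def by simp
        have "z ^ 2 = r w ^ 2 * r v ^ 2" using wv(1) by (simp only: power_mult_distrib)
        also have "\<dots> = c" unfolding c_def using sqrt wv(2,3) by simp
        finally have zc: "z * z = c" by (simp only: power2_eq_square)
        have gz: "poly g z = 0" unfolding g_def by (simp add: zc[symmetric])
        have "r w \<noteq> 0" "r v \<noteq> 0" using L.r_nz wv(2,3) by auto
        hence znz: "z \<noteq> 0" using wv(1) by simp
        have nd: "\<not> [:-z, 1:] ^ 2 dvd g"
        proof
          assume "[:-z, 1:] ^ 2 dvd g"
          hence "[:-z, 1:] dvd pderiv g" by (rule dbl_root_pderiv)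
          hence "poly (pderiv g) z = 0" by (simp add: poly_eq_0_iff_dvd)
          hence "z + z = 0" unfolding g_def by (simp add: pderiv_pCons) blast
          hence "2 * z = 0" by (simp only: mult_2)
          thus False using znz char by simp
        qed
        from A.move_aut[OF k'(1,2) zk gnz gk gz nd]
        obtain \<sigma> where s: "field_aut \<sigma>" "\<forall>x\<in>k'. \<sigma> x = x" "\<sigma> z \<noteq> z" by blast
        have h: "\<forall>w\<in>L.Om. \<forall>v\<in>L.Om. \<sigma> (r w * r v) = r w * r v" by (rule conjunct2[OF B[OF s(1,2)]])
        have "w \<in> L.Om" "v \<in> L.Om" using wv by auto
        with h have "\<sigma> (r w * r v) = r w * r v" by blast
        thus False using s(3) wv(1) by simp
      qed
    qed
    have "k \<union> Om \<union> P \<subseteq> k'" using Ok Pk k'(2) by (simp only: Un_subset_iff)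
    thus ?thesis unfolding m_def by (rule field_gen_least[OF k'(1)])
  qed
  have "is_field_of_def_seq k (Lambda_lines f d) m"
    unfolding is_field_of_def_seq_def using m_sf gen_m fixes_m minimal by blast
  thus ?thesis unfolding m_def Om_def P_def .
qed


end
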